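(* Let $m,n$ be natural numbers with $m\geqslant3$, and let $c_1,C_1$ be positive constants. Let $(\psi_1,\dots,\psi_m)=\Psi:\mathbb{R}^n\to\mathbb{R}^m$ be a system of homogeneous linear forms whose coefficients are bounded in absolute value by $C_1$, and suppose $\Psi$ has $c_1$-Cauchy–Schwarz complexity $s$ for some finite $s$. Then for each $i\in[m]$ there is an extension $\Psi':\mathbb{R}^{n'}\to\mathbb{R}^m$ of $\Psi$ such that: (1) $n'=n+s+1\leqslant n+m-1$; (2) $\Psi'(\mathbf u,w_1,\dots,w_{s+1})=\Psi(\mathbf u+w_1\mathbf f_1+\dots+w_{s+1}\mathbf f_{s+1})$ for some vectors $\mathbf f_k\in\mathbb{R}^n$ with $\Vert\mathbf f_k\Vert_\infty=O_{c_1,C_1}(1)$ for every $k$; (3) $\Psi'$ is in normal form with respect to $\psi'_i$; (4) $\psi'_i(\mathbf0,\mathbf w)=w_1+\dots+w_{s+1}$.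
   Context: A linear map $\Psi:\mathbb{R}^n\to\mathbb{R}^m$ is viewed as a system of homogeneous linear forms $(\psi_1,\dots,\psi_m)$ (its coordinate functions) and identified with its $m\times n$ matrix; $\operatorname{dist}$ is $\ell^\infty$ distance between matrices (entries as coordinates). Normal form: $\Psi$ is in normal form with respect to $\psi_i$ if there is an integer $t\geqslant0$ and a set $J_i$ of $t+1$ standard basis vectors of $\mathbb{R}^n$ such that $\prod_{\mathbf e\in J_i}\psi_{i'}(\mathbf e)$ is non-zero for $i'=i$ and zero for every $i'\neq i$. Extension: $\Psi'=(\psi'_1,\dots,\psi'_m):\mathbb{R}^{n'}\to\mathbb{R}^m$ with $n'\geqslant n$ is an extension of $\Psi$ if $\Psi'(\mathbb{R}^{n'})=\Psi(\mathbb{R}^n)$ and $\Psi$ is the restriction of $\Psi'$ to $\mathbb{R}^n\times\{0\}^{n'-n}$. Suitable partitions: for $i\in[m]$, a partition $\mathcal P_i$ of $[m]\setminus\{i\}$ into disjoint parts $\mathcal C_1,\dots,\mathcal C_{t+1}$ is suitable for $\Psi$ if $\psi_i\notin\mathrm{span}_{\mathbb{R}}(\psi_j:j\in\mathcal C_k)$ for every $k$; $V_{\mathcal P_i}$ denotes the set of all systems $\Psi:\mathbb{R}^n\to\mathbb{R}^m$ for which $\mathcal P_i$ is not suitable. $c_1$-Cauchy–Schwarz complexity: for each $i$, $s_i+1$ is the minimal number of parts of a partition $\mathcal P_i$ of $[m]\setminus\{i\}$ with $\operatorname{dist}(\Psi,V_{\mathcal P_i})\geqslant c_1$ ($s_i=\infty$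 if none exists), and $s=\max(1,\max_is_i)$. $O_{c_1,C_1}(1)$ denotes a bound depending only on $c_1,C_1,m,n$. *)

theory Defs
  imports Complex_Main "HOL-Library.Disjoint_Sets"
begin

(* A system Psi : R^N -> R^M of linear forms is represented by its M x N matrix
   as a function  Psi :: nat => nat => real ; row i (i < M) is the form psi_i,
   its coefficients are  Psi i j  for  j < N.  Entries outside the range are irrelevant.
   Indices are 0-based: [m] = {0..<m}. *)

definition form_apply :: "(nat \<Rightarrow> nat \<Rightarrow> real) \<Rightarrow> nat \<Rightarrow> nat \<Rightarrow> (nat \<Rightarrow> real) \<Rightarrow> real" where
  "form_apply Psi N i x = (\<Sum>j<N. Psi i j * x j)"

definition sys_image :: "(nat \<Rightarrow> nat \<Rightarrow> real) \<Rightarrow> nat \<Rightarrow> nat \<Rightarrow> (nat \<Rightarrow> real) set" where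
  "sys_image Psi M N = {(\<lambda>i. if i < M then form_apply Psi N i x else 0) | x. True}"

definition mat_dist :: "nat \<Rightarrow> nat \<Rightarrow> (nat \<Rightarrow> nat \<Rightarrow> real) \<Rightarrow> (nat \<Rightarrow> nat \<Rightarrow> real) \<Rightarrow> real" where
  "mat_dist M N A B = Max (insert 0 {\<bar>A i j - B i j\<bar> | i j. i < M \<and> j < N})"

definition in_span_forms :: "(nat \<Rightarrow> nat \<Rightarrow> real) \<Rightarrow> nat \<Rightarrow> nat set \<Rightarrow> nat \<Rightarrow> bool" where
  "in_span_forms Psi N C i \<longleftrightarrow> (\<exists>a::nat \<Rightarrow> real. \<forall>k<N. Psi i k = (\<Sum>j\<in>C. a j * Psi j k))"

definition suitable :: "(nat \<Rightarrow> nat \<Rightarrow> real) \<Rightarrow> nat \<Rightarrow> nat \<Rightarrow> nat set set \<Rightarrow> bool" where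
  "suitable Psi N i P \<longleftrightarrow> (\<forall>C\<in>P. \<not> in_span_forms Psi N C i)"

(* dist(Psi, V_P) >= c1, where V_P = systems R^N -> R^M for which P is not suitable
   (the infimum over V_P is >= c1 iff every member has distance >= c1) *)
definition far_from_V :: "nat \<Rightarrow> nat \<Rightarrow> real \<Rightarrow> (nat \<Rightarrow> nat \<Rightarrow> real) \<Rightarrow> nat \<Rightarrow> nat set set \<Rightarrow> bool" where
  "far_from_V M N c1 Psi i P \<longleftrightarrow>
     (\<forall>Phi. \<not> suitable Phi N i P \<longrightarrow> mat_dist M N Psi Phi \<ge> c1)"

definition good_partition :: "nat \<Rightarrow> nat \<Rightarrow> real \<Rightarrow> (nat \<Rightarrow> nat \<Rightarrow> real) \<Rightarrow> nat \<Rightarrow> nat set set \<Rightarrow> bool" where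
  "good_partition M N c1 Psi i P \<longleftrightarrow> partition_on ({..<M} - {i}) P \<and> far_from_V M N c1 Psi i P"

definition cs_index :: "nat \<Rightarrow> nat \<Rightarrow> real \<Rightarrow> (nat \<Rightarrow> nat \<Rightarrow> real) \<Rightarrow> nat \<Rightarrow> nat" where
  "cs_index M N c1 Psi i = (LEAST t. \<exists>P. good_partition M N c1 Psi i P \<and> card P = t + 1)"

definition has_cs_complexity :: "nat \<Rightarrow> nat \<Rightarrow> real \<Rightarrow> (nat \<Rightarrow> nat \<Rightarrow> real) \<Rightarrow> nat \<Rightarrow> bool" where
  "has_cs_complexity M N c1 Psi s \<longleftrightarrow>
     (\<forall>i<M. \<exists>P. good_partition M N c1 Psi i P) \<and>
     s = max 1 (Max ((\<lambda>i. cs_index M N c1 Psi i) ` {..<M}))"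

definition is_extension :: "nat \<Rightarrow> nat \<Rightarrow> nat \<Rightarrow> (nat \<Rightarrow> nat \<Rightarrow> real) \<Rightarrow> (nat \<Rightarrow> nat \<Rightarrow> real) \<Rightarrow> bool" where
  "is_extension M N N' Psi' Psi \<longleftrightarrow> N' \<ge> N \<and> sys_image Psi' M N' = sys_image Psi M N \<and>
     (\<forall>i<M. \<forall>j<N. Psi' i j = Psi i j)"

definition normal_form_wrt :: "nat \<Rightarrow> nat \<Rightarrow> (nat \<Rightarrow> nat \<Rightarrow> real) \<Rightarrow> nat \<Rightarrow> bool" where
  "normal_form_wrt M N Psi i \<longleftrightarrow>
     (\<exists>(t::nat) J. J \<subseteq> {..<N} \<and> card J = t + 1 \<and>
        (\<Prod>j\<in>J. Psi i j) \<noteq> 0 \<and> (\<forall>i'<M. i' \<noteq> i \<longrightarrow> (\<Prod>j\<in>J. Psi i' j) = 0))"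

end

theory Submission
  imports Defs
begin

definition ipn :: "nat \<Rightarrow> (nat \<Rightarrow> real) \<Rightarrow> (nat \<Rightarrow> real) \<Rightarrow> real" where
  "ipn n u v = (\<Sum>l<n. u l * v l)"

lemma ipn_self_zero:
  assumes "ipn n h h = 0" "k < n" shows "h k = 0"
proof -
  have "\<forall>l\<in>{..<n}. h l * h l = 0"
    using assms(1) unfolding ipn_def
    by (subst sum_nonneg_eq_0_iff[symmetric]) auto
  then show ?thesis using assms(2) by auto
qed

lemma ipn_comb:
  assumes "\<forall>k<n. w k = h k + (\<Sum>j\<in>C. b j * r j k)"
  shows "ipn n u w = ipn n u h + (\<Sum>j\<in>C. b j * ipn n u (r j))"
proof -
  have "ipn n u w = (\<Sum>l<n. u l * h l + (\<Sum>j\<in>C. b j * (u l * r j l)))"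
    unfolding ipn_def using assms
    by (intro sum.cong) (auto simp: sum_distrib_left algebra_simps)
  also have "\<dots> = ipn n u h + (\<Sum>j\<in>C. b j * ipn n u (r j))"
    unfolding ipn_def sum.distrib
    by (simp add: sum_distrib_left sum.swap[of _ C])
  finally show ?thesis .
qed

lemma proj_exists:
  assumes "finite C"
  shows "\<exists>g a. (\<forall>k<n. x k - g k = (\<Sum>j\<in>C. a j * r j k)) \<and> (\<forall>j\<in>C. ipn n g (r j) = 0)"
  using assms
proof (induction C arbitrary: x rule: finite_induct)
  case empty
  show ?case by (rule exI[of _ x]) auto
next
  case (insert v C)
  obtain g1 a1 where g1: "\<forall>k<n. x k - g1 k = (\<Sum>j\<in>C. a1 j * r j k)" "\<forall>j\<in>C. ipn n g1 (r j) = 0"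
    using insert.IH by blast
  obtain h b where h: "\<forall>k<n. r v k - h k = (\<Sum>j\<in>C. b j * r j k)" "\<forall>j\<in>C. ipn n h (r j) = 0"
    using insert.IH by blast
  define c where "c = ipn n g1 h / ipn n h h"
  define g where "g = (\<lambda>l. g1 l - c * h l)"
  define a where "a = (\<lambda>j. if j = v then c else a1 j - c * b j)"
  have span: "\<forall>k<n. x k - g k = (\<Sum>j\<in>insert v C. a j * r j k)"
  proof (intro allI impI)
    fix k assume k: "k < n"
    have "(\<Sum>j\<in>insert v C. a j * r j k) = c * r v k + (\<Sum>j\<in>C. (a1 j - c * b j) * r j k)"
      using insert.hyps unfolding a_def by (auto intro!: sum.cong)
    also have "\<dots> = c * r v k + (\<Sum>j\<in>C. a1 j * r j k) - c * (\<Sum>j\<in>C. b j * r j k)"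
      by (simp add: algebra_simps sum_subtractf sum_distrib_left)
    also have "\<dots> = x k - g k"
      using g1(1) h(1) k unfolding g_def by (simp add: algebra_simps)
    finally show "x k - g k = (\<Sum>j\<in>insert v C. a j * r j k)" by simp
  qed
  have lin: "ipn n g w = ipn n g1 w - c * ipn n h w" for w
    unfolding ipn_def g_def by (simp add: algebra_simps sum_subtractf sum_distrib_left)
  have orthC: "\<forall>j\<in>C. ipn n g (r j) = 0" using lin g1(2) h(2) by simp
  have gh: "ipn n g h = 0"
  proof (cases "ipn n h h = 0")
    case True
    then have "ipn n g1 h = 0" unfolding ipn_def using ipn_self_zero[OF True] by simp
    then show ?thesis using lin True by simp
  next
    case False
    then show ?thesis using lin unfolding c_def by simp
  qed
  have "\<forall>k<n. r v k = h k + (\<Sum>j\<in>C. b j * r j k)" using h(1) by (simp add: algebra_simps)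
  from ipn_comb[OF this, of g] have "ipn n g (r v) = 0" using gh orthC by simp
  with orthC span show ?case by blast
qed

lemma part_vec:
  fixes Psi :: "nat \<Rightarrow> nat \<Rightarrow> real"
  assumes far: "far_from_V m n c1 Psi i P" and CP: "C \<in> P" and fC: "finite C"
    and iC: "i \<notin> C" and im: "i < m" and c1: "c1 > 0"
  shows "\<exists>f. (\<Sum>l<n. Psi i l * f l) = 1 \<and> (\<forall>j\<in>C. (\<Sum>l<n. Psi j l * f l) = 0)
             \<and> (\<forall>l<n. \<bar>f l\<bar> \<le> 1 / c1)"
proof -
  obtain g a where ga: "\<forall>k<n. Psi i k - g k = (\<Sum>j\<in>C. a j * Psi j k)"
      "\<forall>j\<in>C. ipn n g (Psi j) = 0"
    using proj_exists[OF fC, of n "Psi i" Psi] by blast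
  define Phi where "Phi = Psi(i := (\<lambda>k. Psi i k - g k))"
  have "in_span_forms Phi n C i"
    unfolding in_span_forms_def
  proof (rule exI[of _ a], intro allI impI)
    fix k assume "k < n"
    then have "Phi i k = (\<Sum>j\<in>C. a j * Psi j k)" using ga(1) by (simp add: Phi_def)
    also have "\<dots> = (\<Sum>j\<in>C. a j * Phi j k)"
      using iC by (intro sum.cong) (auto simp: Phi_def)
    finally show "Phi i k = (\<Sum>j\<in>C. a j * Phi j k)" .
  qed
  then have "\<not> suitable Phi n i P" using CP unfolding suitable_def by blast
  then have md: "mat_dist m n Psi Phi \<ge> c1" using far unfolding far_from_V_def by blast
  have "\<exists>l<n. \<bar>g l\<bar> \<ge> c1"
  proof (rule ccontr)
    assume "\<not> ?thesis"
    then have lt: "\<forall>l<n. \<bar>g l\<bar> < c1" by auto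
    define S where "S = {\<bar>Psi i' j - Phi i' j\<bar> | i' j. i' < m \<and> j < n}"
    have "S = (\<lambda>(i',j). \<bar>Psi i' j - Phi i' j\<bar>) ` ({..<m} \<times> {..<n})"
      unfolding S_def by auto
    then have fS: "finite S" by simp
    have "\<forall>x\<in>S. x < c1" using lt c1 unfolding S_def Phi_def by auto
    then have "Max (insert 0 S) < c1" using fS c1 by (simp add: Max_less_iff)
    then show False using md unfolding mat_dist_def S_def by simp
  qed
  then obtain l0 where l0: "l0 < n" "\<bar>g l0\<bar> \<ge> c1" by blast
  define G where "G = ipn n g g"
  have Gk: "g k * g k \<le> G" if "k < n" for k
    unfolding G_def ipn_def using that
    by (intro member_le_sum) auto
  have "c1 * c1 \<le> \<bar>g l0\<bar> * \<bar>g l0\<bar>" using l0 c1 by (intro mult_mono) auto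
  then have Gc: "c1 * c1 \<le> G" using Gk[OF l0(1)] by (simp add: abs_mult_self_eq)
  then have Gpos: "G > 0" using c1 by (smt (verit) mult_pos_pos)
  define f where "f = (\<lambda>l. g l / G)"
  have "\<forall>k<n. Psi i k = g k + (\<Sum>j\<in>C. a j * Psi j k)" using ga(1) by (simp add: algebra_simps)
  from ipn_comb[OF this, of g] have "ipn n g (Psi i) = G"
    using ga(2) unfolding G_def by simp
  then have 1: "(\<Sum>l<n. Psi i l * f l) = 1"
    unfolding f_def ipn_def using Gpos
    by (simp add: sum_divide_distrib[symmetric] mult.commute)
  have 2: "\<forall>j\<in>C. (\<Sum>l<n. Psi j l * f l) = 0"
  proof
    fix j assume "j \<in> C"
    then have "ipn n g (Psi j) = 0" using ga(2) by blast
    then show "(\<Sum>l<n. Psi j l * f l) = 0"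
      unfolding f_def ipn_def
      by (simp add: sum_divide_distrib[symmetric] mult.commute)
  qed
  have 3: "\<forall>l<n. \<bar>f l\<bar> \<le> 1 / c1"
  proof (intro allI impI)
    fix l assume l: "l < n"
    have "\<bar>g l\<bar> * c1 \<le> G"
    proof (cases "\<bar>g l\<bar> \<ge> c1")
      case True
      then have "\<bar>g l\<bar> * c1 \<le> \<bar>g l\<bar> * \<bar>g l\<bar>" by (intro mult_left_mono) auto
      then show ?thesis using Gk[OF l] by (simp add: abs_mult_self_eq)
    next
      case False
      then have "\<bar>g l\<bar> * c1 \<le> c1 * c1" using c1 by (intro mult_right_mono) auto
      then show ?thesis using Gc by linarith
    qed
    then show "\<bar>f l\<bar> \<le> 1 / c1"
      unfolding f_def using Gpos c1 by (simp add: abs_div field_simps)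
  qed
  from 1 2 3 show ?thesis by blast
qed

lemma sum_split_n:
  "(\<Sum>j<n + (t::nat). F j) = (\<Sum>j<n. F j) + (\<Sum>k<t. F (n + k))"
  by (induction t) (auto simp: add.assoc)

lemma card_part_le:
  assumes "partition_on A P" "finite A"
  shows "card P \<le> card A"
proof -
  have fp: "\<And>p. p \<in> P \<Longrightarrow> finite p"
    using assms partition_onD1 by (metis Union_upper finite_subset)
  have "card P = (\<Sum>p\<in>P. 1)" by simp
  also have "\<dots> \<le> (\<Sum>p\<in>P. card p)"
  proof (intro sum_mono)
    fix p assume "p \<in> P"
    then have "p \<noteq> {}" using assms(1) partition_onD3 by blast
    then show "1 \<le> card p" using fp[OF \<open>p \<in> P\<close>] by (simp add: Suc_leI card_gt_0_iff)
  qed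
  also have "\<dots> = card A" using product_partition[OF assms(1) fp] by simp
  finally show ?thesis .
qed

lemma cs_index_good:
  assumes "good_partition M N c1 Psi i P" "card P > 0"
  shows "\<exists>P. good_partition M N c1 Psi i P \<and> card P = cs_index M N c1 Psi i + 1"
    and "cs_index M N c1 Psi i + 1 \<le> card P"
proof -
  obtain t where t: "card P = Suc t" using assms(2) gr0_implies_Suc by blast
  have ex: "\<exists>t P. good_partition M N c1 Psi i P \<and> card P = t + 1"
    using assms(1) t by auto
  then show "\<exists>P. good_partition M N c1 Psi i P \<and> card P = cs_index M N c1 Psi i + 1"
    unfolding cs_index_def by (rule LeastI_ex)
  have "cs_index M N c1 Psi i \<le> t"
    unfolding cs_index_def using assms(1) t by (intro Least_le) auto
  then show "cs_index M N c1 Psi i + 1 \<le> card P" using t by simp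
qed

theorem proposition6p7:
  fixes m n :: nat and c1 C1 :: real
  assumes "m \<ge> 3" and "c1 > 0" and "C1 > 0"
  shows "\<exists>B::real. \<forall>(Psi :: nat \<Rightarrow> nat \<Rightarrow> real) (s::nat).
     (\<forall>i<m. \<forall>j<n. \<bar>Psi i j\<bar> \<le> C1) \<and> has_cs_complexity m n c1 Psi s \<longrightarrow>
     (\<forall>i<m. \<exists>(Psi' :: nat \<Rightarrow> nat \<Rightarrow> real) (f :: nat \<Rightarrow> nat \<Rightarrow> real).
        is_extension m n (n + s + 1) Psi' Psi \<and>
        n + s + 1 \<le> n + m - 1 \<and>
        (\<forall>k<s+1. \<forall>j<n. \<bar>f k j\<bar> \<le> B) \<and>
        (\<forall>i'<m. \<forall>x. form_apply Psi' (n + s + 1) i' x =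
             form_apply Psi n i' (\<lambda>j. x j + (\<Sum>k<s+1. x (n + k) * f k j))) \<and>
        normal_form_wrt m (n + s + 1) Psi' i \<and>
        (\<forall>w. form_apply Psi' (n + s + 1) i (\<lambda>j. if j < n then 0 else w (j - n)) = (\<Sum>k<s+1. w k)))"
proof (rule exI[of _ "1 / c1"], intro allI impI)
  fix Psi :: "nat \<Rightarrow> nat \<Rightarrow> real" and s :: nat and i :: nat
  assume H: "(\<forall>i<m. \<forall>j<n. \<bar>Psi i j\<bar> \<le> C1) \<and> has_cs_complexity m n c1 Psi s"
  assume im: "i < m"
  have goodex: "\<forall>i<m. \<exists>P. good_partition m n c1 Psi i P"
    and sdef: "s = max 1 (Max ((\<lambda>i. cs_index m n c1 Psi i) ` {..<m}))"
    using H unfolding has_cs_complexity_def by auto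
  have cardA: "card ({..<m} - {i'}) = m - 1" if "i' < m" for i'
    using that by simp
  have cs_le: "cs_index m n c1 Psi i' + 1 \<le> m - 1 \<and>
      (\<exists>P. good_partition m n c1 Psi i' P \<and> card P = cs_index m n c1 Psi i' + 1)" if i': "i' < m" for i'
  proof -
    obtain P where P: "good_partition m n c1 Psi i' P" using goodex i' by blast
    have pon: "partition_on ({..<m} - {i'}) P" using P unfolding good_partition_def by simp
    have ne: "{..<m} - {i'} \<noteq> {}"
    proof -
      have "card ({..<m} - {i'}) > 0" using cardA[OF i'] assms(1) by simp
      then show ?thesis by (metis card.empty less_irrefl)
    qed
    have "P \<noteq> {}" using pon ne partition_onD1 by fastforce
    moreover have "finite P" using finite_elements[OF _ pon] by simp
    ultimately have "card P > 0" by (simp add: card_gt_0_iff)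
    note cg = cs_index_good[OF P this]
    have "card P \<le> m - 1" using card_part_le[OF pon] cardA[OF i'] by simp
    then show ?thesis using cg by simp
  qed
  have s_le: "s \<le> m - 2"
  proof -
    have "Max ((\<lambda>i. cs_index m n c1 Psi i) ` {..<m}) \<le> m - 2"
    proof (subst Max_le_iff)
      show "finite ((\<lambda>i. cs_index m n c1 Psi i) ` {..<m})" by simp
      show "(\<lambda>i. cs_index m n c1 Psi i) ` {..<m} \<noteq> {}" using assms(1) by (auto simp: lessThan_empty_iff)
      show "\<forall>a\<in>(\<lambda>i. cs_index m n c1 Psi i) ` {..<m}. a \<le> m - 2"
      proof
        fix a assume "a \<in> (\<lambda>i. cs_index m n c1 Psi i) ` {..<m}"
        then obtain i' where i': "i' < m" "a = cs_index m n c1 Psi i'" by auto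
        have "cs_index m n c1 Psi i' + 1 \<le> m - 1" using cs_le[OF i'(1)] by blast
        then show "a \<le> m - 2" using i'(2) by simp
      qed
    qed
    then show ?thesis using sdef assms(1) by simp
  qed
  have ci_le: "cs_index m n c1 Psi i \<le> s"
  proof -
    have "cs_index m n c1 Psi i \<le> Max ((\<lambda>i. cs_index m n c1 Psi i) ` {..<m})"
      using im by (intro Max_ge) auto
    then show ?thesis using sdef by simp
  qed
  obtain P where P: "good_partition m n c1 Psi i P" "card P = cs_index m n c1 Psi i + 1"
    using cs_le[OF im] by blast
  have pon: "partition_on ({..<m} - {i}) P" and far: "far_from_V m n c1 Psi i P"
    using P unfolding good_partition_def by auto
  have finP: "finite P" using finite_elements[OF _ pon] by simp
  have cardP: "card P \<le> s + 1" using P(2) ci_le by simp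
  have Csub: "C \<subseteq> {..<m} - {i}" if "C \<in> P" for C
    using pon that partition_onD1 by blast
  have "\<forall>C\<in>P. \<exists>f. (\<Sum>l<n. Psi i l * f l) = 1 \<and> (\<forall>j\<in>C. (\<Sum>l<n. Psi j l * f l) = 0)
             \<and> (\<forall>l<n. \<bar>f l\<bar> \<le> 1 / c1)"
  proof
    fix C assume C: "C \<in> P"
    have "finite C" using Csub[OF C] by (meson finite_Diff finite_lessThan finite_subset)
    moreover have "i \<notin> C" using Csub[OF C] by blast
    ultimately show "\<exists>f. (\<Sum>l<n. Psi i l * f l) = 1 \<and> (\<forall>j\<in>C. (\<Sum>l<n. Psi j l * f l) = 0)
             \<and> (\<forall>l<n. \<bar>f l\<bar> \<le> 1 / c1)"
      using part_vec[OF far C _ _ im assms(2)] by blast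
  qed
  then obtain fv where fv: "\<forall>C\<in>P. (\<Sum>l<n. Psi i l * fv C l) = 1 \<and> (\<forall>j\<in>C. (\<Sum>l<n. Psi j l * fv C l) = 0)
             \<and> (\<forall>l<n. \<bar>fv C l\<bar> \<le> 1 / c1)"
    by metis
  obtain h where h: "bij_betw h {0..<card P} P" using ex_bij_betw_nat_finite[OF finP] by blast
  have cP0: "card P > 0" using P(2) by simp
  define e where "e = (\<lambda>k. h (if k < card P then k else 0))"
  have eP: "e k \<in> P" for k
    unfolding e_def using h cP0 by (auto simp: bij_betw_def)
  have esurj: "\<exists>k<s+1. e k = C" if "C \<in> P" for C
  proof -
    have "C \<in> h ` {0..<card P}" using bij_betw_imp_surj_on[OF h] that by simp
    then obtain k where k: "k < card P" "h k = C" by auto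
    have "e k = C" unfolding e_def using k by simp
    moreover have "k < s + 1" using k(1) cardP by linarith
    ultimately show ?thesis by blast
  qed
  define f where "f = (\<lambda>k j. fv (e k) j)"
  define Psi' where "Psi' = (\<lambda>i' j. if j < n then Psi i' j else (\<Sum>l<n. Psi i' l * f (j - n) l))"
  have Nsplit: "n + s + 1 = n + (s + 1)" by simp
  have fa_split: "form_apply Psi' (n + s + 1) i' x =
      (\<Sum>j<n. Psi i' j * x j) + (\<Sum>k<s+1. (\<Sum>l<n. Psi i' l * f k l) * x (n + k))" for i' x
  proof -
    have "form_apply Psi' (n + s + 1) i' x = (\<Sum>j<n. Psi' i' j * x j) + (\<Sum>k<s+1. Psi' i' (n + k) * x (n + k))"
      unfolding form_apply_def Nsplit by (rule sum_split_n)
    also have "(\<Sum>j<n. Psi' i' j * x j) = (\<Sum>j<n. Psi i' j * x j)"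
      by (intro sum.cong) (auto simp: Psi'_def)
    also have "(\<Sum>k<s+1. Psi' i' (n + k) * x (n + k)) = (\<Sum>k<s+1. (\<Sum>l<n. Psi i' l * f k l) * x (n + k))"
      by (intro sum.cong) (auto simp: Psi'_def)
    finally show ?thesis .
  qed
  have ident: "form_apply Psi' (n + s + 1) i' x =
             form_apply Psi n i' (\<lambda>j. x j + (\<Sum>k<s+1. x (n + k) * f k j))" for i' x
  proof -
    have "form_apply Psi n i' (\<lambda>j. x j + (\<Sum>k<s+1. x (n + k) * f k j))
        = (\<Sum>j<n. Psi i' j * x j) + (\<Sum>j<n. \<Sum>k<s+1. Psi i' j * f k j * x (n + k))"
      unfolding form_apply_def
      by (simp add: algebra_simps sum.distrib sum_distrib_left)
    also have "\<dots> = (\<Sum>j<n. Psi i' j * x j) + (\<Sum>k<s+1. (\<Sum>l<n. Psi i' l * f k l) * x (n + k))"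
      by (simp add: sum.swap[of _ "{..<n}"] sum_distrib_right)
    finally show ?thesis using fa_split by simp
  qed
  have ext: "is_extension m n (n + s + 1) Psi' Psi"
    unfolding is_extension_def
  proof (intro conjI allI impI)
    show "sys_image Psi' m (n + s + 1) = sys_image Psi m n"
    proof
      show "sys_image Psi' m (n + s + 1) \<subseteq> sys_image Psi m n"
      proof
        fix y assume "y \<in> sys_image Psi' m (n + s + 1)"
        then obtain x where y: "y = (\<lambda>i. if i < m then form_apply Psi' (n + s + 1) i x else 0)"
          unfolding sys_image_def by blast
        then have "y = (\<lambda>i. if i < m then form_apply Psi n i (\<lambda>j. x j + (\<Sum>k<s+1. x (n + k) * f k j)) else 0)"
          by (simp only: ident)
        then show "y \<in> sys_image Psi m n" unfolding sys_image_def by blast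
      qed
    next
      show "sys_image Psi m n \<subseteq> sys_image Psi' m (n + s + 1)"
      proof
        fix y assume "y \<in> sys_image Psi m n"
        then obtain x where y: "y = (\<lambda>i. if i < m then form_apply Psi n i x else 0)"
          unfolding sys_image_def by blast
        define x' where "x' = (\<lambda>j. if j < n then x j else (0::real))"
        have fx: "form_apply Psi' (n + s + 1) i' x' = form_apply Psi n i' x" for i'
        proof -
          have "form_apply Psi' (n + s + 1) i' x' = (\<Sum>j<n. Psi i' j * x' j) + (\<Sum>k<s+1. (\<Sum>l<n. Psi i' l * f k l) * x' (n + k))"
            by (rule fa_split)
          also have "\<dots> = (\<Sum>j<n. Psi i' j * x j)" by (simp add: x'_def)
          finally show ?thesis unfolding form_apply_def .
        qed
        then have "y = (\<lambda>i. if i < m then form_apply Psi' (n + s + 1) i x' else 0)"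
          by (simp only: y fx)
        then show "y \<in> sys_image Psi' m (n + s + 1)" unfolding sys_image_def by blast
      qed
    qed
  qed (auto simp: Psi'_def)
  have fbound: "\<forall>k<s+1. \<forall>j<n. \<bar>f k j\<bar> \<le> 1 / c1"
    using fv eP unfolding f_def by blast
  have rowi: "(\<Sum>l<n. Psi i l * f k l) = 1" for k
    using fv eP unfolding f_def by blast
  have nf: "normal_form_wrt m (n + s + 1) Psi' i"
    unfolding normal_form_wrt_def
  proof (intro exI[of _ s] exI[of _ "{n..<n+s+1}"] conjI allI impI)
    show "{n..<n + s + 1} \<subseteq> {..<n + s + 1}" by auto
    show "card {n..<n + s + 1} = s + 1" by simp
    have "(\<Prod>j\<in>{n..<n + s + 1}. Psi' i j) = (\<Prod>j\<in>{n..<n + s + 1}. 1)"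
    proof (rule prod.cong)
      fix j assume "j \<in> {n..<n + s + 1}"
      then have "\<not> j < n" by simp
      then have "Psi' i j = (\<Sum>l<n. Psi i l * f (j - n) l)" unfolding Psi'_def by simp
      then show "Psi' i j = 1" using rowi[of "j - n"] by simp
    qed simp
    then show "(\<Prod>j\<in>{n..<n + s + 1}. Psi' i j) \<noteq> 0" by simp
  next
    fix i' assume i': "i' < m" "i' \<noteq> i"
    then have "i' \<in> \<Union>P" using i' by (simp add: partition_onD1[OF pon, symmetric])
    then obtain C where C: "C \<in> P" "i' \<in> C" by blast
    obtain k where k: "k < s + 1" "e k = C" using esurj[OF C(1)] by blast
    have "Psi' i' (n + k) = (\<Sum>l<n. Psi i' l * fv (e k) l)" unfolding Psi'_def f_def by simp
    also have "\<dots> = 0" using fv C k by blast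
    finally have z: "Psi' i' (n + k) = 0" .
    have "n + k \<in> {n..<n + s + 1}" using k by simp
    then show "(\<Prod>j\<in>{n..<n + s + 1}. Psi' i' j) = 0"
      using z by (intro prod_zero) blast+
  qed
  have last: "form_apply Psi' (n + s + 1) i (\<lambda>j. if j < n then 0 else w (j - n)) = (\<Sum>k<s+1. w k)" for w
  proof -
    have "form_apply Psi' (n + s + 1) i (\<lambda>j. if j < n then 0 else w (j - n)) =
      (\<Sum>j<n. Psi i j * (if j < n then 0 else w (j - n))) + (\<Sum>k<s+1. (\<Sum>l<n. Psi i l * f k l) * (if n + k < n then 0 else w (n + k - n)))"
      by (rule fa_split)
    also have "\<dots> = (\<Sum>k<s+1. w k)" using rowi by simp
    finally show ?thesis .
  qed
  have sm: "n + s + 1 \<le> n + m - 1" using s_le assms(1) by simp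
  show "\<exists>Psi' f. is_extension m n (n + s + 1) Psi' Psi \<and> n + s + 1 \<le> n + m - 1 \<and>
        (\<forall>k<s + 1. \<forall>j<n. \<bar>f k j\<bar> \<le> 1 / c1) \<and>
        (\<forall>i'<m. \<forall>x. form_apply Psi' (n + s + 1) i' x =
             form_apply Psi n i' (\<lambda>j. x j + (\<Sum>k<s + 1. x (n + k) * f k j))) \<and>
        normal_form_wrt m (n + s + 1) Psi' i \<and>
        (\<forall>w. form_apply Psi' (n + s + 1) i (\<lambda>j. if j < n then 0 else w (j - n)) = (\<Sum>k<s + 1. w k))"
    using ext sm fbound ident nf last by blast
qed

end
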